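(* Let $\mathcal{A}$ be a set of $N$ arms and $1\le B\le N$. In the full feedback setting, any randomized algorithm that selects $B$ arms per round has worst-case expected regret \[R_T^*\ge\Omega\left(\left(\tfrac14\right)^B(\log_2(N)-\log_2(B))\right)\quad\text{for }T\ge\Omega(\log_2(N)-\log_2(B)).\]
   Context: In each round $t=1,\dots,T$ an oblivious adversary fixes $c_t:\mathcal{A}\to[0,1]$; the algorithm picks $S_t\subset\mathcal{A}$ with $|S_t|=B$ and incurs cost $c_t(S_t):=\min_{a\in S_t}c_t(a)$; then $c_t$ is revealed (full feedback). $R_T^*(\mathbf{ALG}):=\max_{c_1,\dots,c_T}\mathbb{E}\left[\sum_{t=1}^T c_t(S_t)-\min_{a^*\in\mathcal{A}}\sum_{t=1}^T c_t(a^* )\right]$, expectation over the algorithm's randomness. *)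

theory Defs
  imports "HOL-Probability.Probability"
begin

text \<open>An adversary is a sequence of cost functions
  (round t = 0,1,...), fixed in advance (oblivious).\<close>

definition valid_cost :: "nat set \<Rightarrow> (nat \<Rightarrow> real) \<Rightarrow> bool" where
  "valid_cost A c \<longleftrightarrow> (\<forall>a\<in>A. 0 \<le> c a \<and> c a \<le> 1)"

text \<open>A randomized full-feedback algorithm: given the history of revealed
  cost functions c_1..c_(t-1) (a list of length t-1), it outputs the
  distribution of the chosen set S_t. Against an oblivious adversary the
  expected cost depends only on these per-round laws.\<close>

definition valid_alg :: "nat set \<Rightarrow> nat \<Rightarrow> ((nat \<Rightarrow> real) list \<Rightarrow> nat set pmf) \<Rightarrow> bool" where
  "valid_alg A B alg \<longleftrightarrow> (\<forall>h. set_pmf (alg h) \<subseteq> {S. S \<subseteq> A \<and> card S = B})"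

definition regret :: "nat set \<Rightarrow> ((nat \<Rightarrow> real) list \<Rightarrow> nat set pmf) \<Rightarrow> nat
    \<Rightarrow> (nat \<Rightarrow> nat \<Rightarrow> real) \<Rightarrow> real" where
  "regret A alg T cs =
     (\<Sum>t<T. measure_pmf.expectation (alg (map cs [0..<t])) (\<lambda>S. Min (cs t ` S)))
     - Min ((\<lambda>a. \<Sum>t<T. cs t a) ` A)"

definition worst_regret :: "nat set \<Rightarrow> ((nat \<Rightarrow> real) list \<Rightarrow> nat set pmf) \<Rightarrow> nat \<Rightarrow> real" where
  "worst_regret A alg T =
     (SUP cs \<in> {cs. \<forall>t. valid_cost A (cs t)}. regret A alg T cs)"

end

theory Submission
  imports Defs
begin
lemma count_hit:
  fixes G :: "nat \<Rightarrow> nat set"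
  assumes "finite S" "disjoint_family_on G {..<K}"
  shows "(\<Sum>d<K. (if S \<inter> G d = {} then 1 else 0::real)) \<ge> real K - real (card S)"
proof -
  define D where "D = {d\<in>{..<K}. S \<inter> G d \<noteq> {}}"
  define f where "f d = (SOME a. a \<in> S \<inter> G d)" for d
  have f: "f d \<in> S \<inter> G d" if "d \<in> D" for d
  proof -
    from that have "\<exists>a. a \<in> S \<inter> G d" unfolding D_def by blast
    then show ?thesis unfolding f_def by (rule someI_ex)
  qed
  have "inj_on f D"
  proof
    fix x y assume xy: "x \<in> D" "y \<in> D" "f x = f y"
    show "x = y"
    proof (rule ccontr)
      assume "x \<noteq> y"
      moreover have "x \<in> {..<K}" "y \<in> {..<K}" using xy(1,2) unfolding D_def by auto
      ultimately have "G x \<inter> G y = {}" using assms(2) unfolding disjoint_family_on_def by blast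
      with f[OF xy(1)] f[OF xy(2)] xy(3) show False by auto
    qed
  qed
  moreover have "f ` D \<subseteq> S" using f by auto
  ultimately have cD: "card D \<le> card S" using assms(1) card_inj_on_le by blast
  have eq: "{d\<in>{..<K}. S \<inter> G d = {}} = {..<K} - D" unfolding D_def by auto
  have "(\<Sum>d<K. (if S \<inter> G d = {} then 1 else 0::real)) = real (card {d\<in>{..<K}. S \<inter> G d = {}})"
  proof -
    have "{..<K} \<inter> {d. S \<inter> G d = {}} = {d\<in>{..<K}. S \<inter> G d = {}}" by auto
    then show ?thesis by (simp add: sum.If_cases)
  qed
  also have "\<dots> = real (card ({..<K} - D))" by (simp only: eq)
  also have "card ({..<K} - D) = K - card D"
    by (subst card_Diff_subset) (auto simp: D_def)
  finally show ?thesis using cD by simp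
qed

lemma one_step:
  fixes mu :: "nat set pmf" and G :: "nat \<Rightarrow> nat set"
  assumes "finite A" "set_pmf mu \<subseteq> {S. S \<subseteq> A \<and> card S = B}" "K \<ge> 1"
    "disjoint_family_on G {..<K}"
  shows "\<exists>d<K. measure_pmf.expectation mu (\<lambda>S. if S \<inter> G d = {} then 1 else 0)
           \<ge> (real K - real B) / K"
proof (rule ccontr)
  assume H: "\<not> ?thesis"
  define F where "F d S = (if S \<inter> G d = {} then 1 else (0::real))" for d S
  have sub: "set_pmf mu \<subseteq> Pow A" using assms(2) by blast
  have fin: "finite (set_pmf mu)"
    by (rule finite_subset[OF sub]) (simp add: assms(1))
  have int: "integrable (measure_pmf mu) g" for g :: "nat set \<Rightarrow> real"
    using fin by (rule integrable_measure_pmf_finite)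
  have "measure_pmf.expectation mu (\<lambda>S. \<Sum>d<K. F d S) = (\<Sum>d<K. measure_pmf.expectation mu (F d))"
    by (rule Bochner_Integration.integral_sum) (rule int)
  moreover have "measure_pmf.expectation mu (\<lambda>S. \<Sum>d<K. F d S) \<ge> measure_pmf.expectation mu (\<lambda>S. real K - real B)"
  proof (rule integral_mono_AE[OF int int])
    show "AE S in measure_pmf mu. real K - real B \<le> (\<Sum>d<K. F d S)"
    proof (rule AE_pmfI)
      fix S assume "S \<in> set_pmf mu"
      with assms(2) have SA: "S \<subseteq> A" "card S = B" by auto
      have "finite S" using SA(1) assms(1) by (rule finite_subset)
      from count_hit[OF this assms(4)] show "real K - real B \<le> (\<Sum>d<K. F d S)"
        unfolding SA(2) F_def .
    qed
  qed
  moreover have "measure_pmf.expectation mu (\<lambda>S. real K - real B) = real K - real B"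
    by simp
  ultimately have ge: "(\<Sum>d<K. measure_pmf.expectation mu (F d)) \<ge> real K - real B"
    by linarith
  have "(\<Sum>d<K. measure_pmf.expectation mu (F d)) < (\<Sum>d<K. (real K - real B) / K)"
  proof (rule sum_strict_mono)
    show "finite {..<K}" by simp
    have "0 \<in> {..<K}" using assms(3) by simp
    then show "{..<K} \<noteq> {}" by blast
    fix d assume "d \<in> {..<K}"
    then show "measure_pmf.expectation mu (F d) < (real K - real B) / K"
      using H unfolding F_def by (simp add: not_le)
  qed
  also have "\<dots> = real K - real B" using assms(3) by simp
  finally show False using ge by simp
qed


lemma exp_bounds:
  assumes "finite A" "1 \<le> B" "valid_alg A B alg" "valid_cost A c"
  shows "0 \<le> measure_pmf.expectation (alg h) (\<lambda>S. Min (c ` S))"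
    and "measure_pmf.expectation (alg h) (\<lambda>S. Min (c ` S)) \<le> 1"
proof -
  have sup: "set_pmf (alg h) \<subseteq> {S. S \<subseteq> A \<and> card S = B}"
    using assms(3) unfolding valid_alg_def by (rule spec)
  have sub: "set_pmf (alg h) \<subseteq> Pow A" using sup by blast
  have fin: "finite (set_pmf (alg h))"
    by (rule finite_subset[OF sub]) (simp add: assms(1))
  have int: "integrable (measure_pmf (alg h)) g" for g :: "nat set \<Rightarrow> real"
    using fin by (rule integrable_measure_pmf_finite)
  have b: "0 \<le> Min (c ` S) \<and> Min (c ` S) \<le> 1" if "S \<in> set_pmf (alg h)" for S
  proof -
    from that sup have SA: "S \<subseteq> A" "card S = B" by auto
    have cpos: "card S > 0" using SA(2) assms(2) by simp
    then have "finite S" by (rule card_ge_0_finite)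
    have "S \<noteq> {}" using cpos by (metis card.empty less_irrefl)
    have "Min (c ` S) \<in> c ` S" by (rule Min_in) (simp_all add: \<open>finite S\<close> \<open>S \<noteq> {}\<close>)
    then obtain a where "a \<in> S" "Min (c ` S) = c a" by blast
    with SA assms(4) show ?thesis unfolding valid_cost_def by auto
  qed
  have AE1: "AE S in measure_pmf (alg h). 0 \<le> Min (c ` S)"
    by (rule AE_pmfI) (rule conjunct1[OF b])
  have AE2: "AE S in measure_pmf (alg h). Min (c ` S) \<le> 1"
    by (rule AE_pmfI) (rule conjunct2[OF b])
  show "0 \<le> measure_pmf.expectation (alg h) (\<lambda>S. Min (c ` S))"
    using AE1 by (rule integral_nonneg_AE)
  have "measure_pmf.expectation (alg h) (\<lambda>S. Min (c ` S)) \<le> measure_pmf.expectation (alg h) (\<lambda>S. 1)"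
    by (rule integral_mono_AE[OF int int AE2])
  then show "measure_pmf.expectation (alg h) (\<lambda>S. Min (c ` S)) \<le> 1" by simp
qed

lemma aux_le: "x \<le> t \<Longrightarrow> 0 \<le> y \<Longrightarrow> x - y \<le> (t::real)" by linarith

lemma regret_le:
  assumes "finite A" "1 \<le> B" "B \<le> card A" "valid_alg A B alg" "\<forall>t. valid_cost A (cs t)"
  shows "regret A alg T cs \<le> T"
proof -
  have X0: "(\<Sum>t<T. measure_pmf.expectation (alg (map cs [0..<t])) (\<lambda>S. Min (cs t ` S))) \<le> (\<Sum>t<T. 1)"
    by (rule sum_mono, rule exp_bounds(2)[OF assms(1,2,4) assms(5)[rule_format]])
  have Y: "Min ((\<lambda>a. \<Sum>t<T. cs t a) ` A) \<ge> 0"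
  proof -
    have ne: "A \<noteq> {}"
    proof
      assume "A = {}" then have "card A = 0" by simp
      with assms(2,3) show False by simp
    qed
    have "Min ((\<lambda>a. \<Sum>t<T. cs t a) ` A) \<in> (\<lambda>a. \<Sum>t<T. cs t a) ` A"
      by (rule Min_in) (simp_all add: assms(1) ne)
    then obtain a where a: "a \<in> A" "Min ((\<lambda>a. \<Sum>t<T. cs t a) ` A) = (\<Sum>t<T. cs t a)"
      by (rule imageE) (rule that, assumption, simp)
    have "(\<Sum>t<T. cs t a) \<ge> 0"
      by (rule sum_nonneg) (use assms(5) a(1) in \<open>simp add: valid_cost_def\<close>)
    then show ?thesis using a(2) by simp
  qed
  have X: "(\<Sum>t<T. measure_pmf.expectation (alg (map cs [0..<t])) (\<lambda>S. Min (cs t ` S))) \<le> real T"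
    using X0 by simp
  show ?thesis unfolding regret_def by (rule aux_le[OF X Y])
qed

lemma worst_ge:
  assumes "finite A" "1 \<le> B" "B \<le> card A" "valid_alg A B alg" "\<forall>t. valid_cost A (cs t)"
  shows "regret A alg T cs \<le> worst_regret A alg T"
  unfolding worst_regret_def
  apply (rule cSUP_upper)
  using assms(5) apply simp
  apply (rule bdd_aboveI2[where M="real T"])
  apply (rule regret_le[OF assms(1-4)])
  apply simp
  done
lemma min_ind:
  fixes c :: "nat \<Rightarrow> real"
  assumes "finite S" "S \<noteq> {}" "\<And>a. c a = (if a \<in> G then 0 else 1)"
  shows "Min (c ` S) = (if S \<inter> G = {} then 1 else 0)"
proof (cases "S \<inter> G = {}")
  case True
  then have "c ` S = {1}" using assms(2,3) by auto
  then show ?thesis using True by simp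
next
  case False
  then obtain a where a: "a \<in> S" "a \<in> G" by blast
  have "Min (c ` S) \<le> c a" using assms(1) a(1) by (intro Min_le) auto
  moreover have "c a = 0" using a(2) assms(3) by simp
  moreover have "Min (c ` S) \<in> c ` S" using assms(1,2) by (intro Min_in) auto
  then have "Min (c ` S) \<ge> 0" using assms(3) by (auto split: if_splits)
  ultimately show ?thesis using False by simp
qed

lemma main_lb:
  assumes A: "finite A" and B1: "1 \<le> B" and BN: "B \<le> card A" and alg: "valid_alg A B alg"
    and K1: "1 \<le> K" and KN: "K ^ k \<le> card A" and kT: "k \<le> T"
  shows "real k * (real K - real B) / real K \<le> worst_regret A alg T"
proof -
  obtain p where bij: "bij_betw p A {0..<card A}" using ex_bij_betw_finite_nat[OF A] by blast
  have supp: "set_pmf (alg h) \<subseteq> {S. S \<subseteq> A \<and> card S = B}" for h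
    using alg unfolding valid_alg_def by (rule spec)
  define E where "E hs (c::nat \<Rightarrow> real) = (measure_pmf.expectation (alg hs) (\<lambda>S. Min (c ` S)) :: real)" for hs c
  define P where "P t hs lo \<longleftrightarrow> length hs = t \<and> (\<forall>c\<in>set hs. \<forall>a. c a = 0 \<or> c a = 1)
     \<and> lo + K ^ (k - t) \<le> K ^ k
     \<and> (\<forall>s<t. \<forall>a\<in>A. lo \<le> p a \<and> p a < lo + K ^ (k - t) \<longrightarrow> (hs ! s) a = 0)
     \<and> real t * (real K - real B) / real K \<le> (\<Sum>s<t. E (take s hs) (hs ! s))" for t hs lo
  have step: "t \<le> k \<Longrightarrow> \<exists>hs lo. P t hs lo" for t
  proof (induction t)
    case 0
    have "P 0 [] 0" unfolding P_def by simp
    then show ?case by blast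
  next
    case (Suc t)
    then obtain hs lo where P: "P t hs lo" by (meson Suc_leD)
    define m where "m = K ^ (k - Suc t)"
    have kt: "k - t = Suc (k - Suc t)" using Suc.prems by arith
    have Km: "K ^ (k - t) = K * m" unfolding m_def kt by simp
    have mpos: "m > 0" unfolding m_def using K1 by simp
    define G where "G d = {a\<in>A. lo + d * m \<le> p a \<and> p a < lo + d * m + m}" for d
    have disj: "disjoint_family_on G {..<K}"
      unfolding disjoint_family_on_def
    proof (intro ballI impI)
      fix d d' assume "d \<in> {..<K}" "d' \<in> {..<K}" "d \<noteq> d'"
      have aux: "G x \<inter> G y = {}" if "x < y" for x y
      proof -
        have "Suc x * m \<le> y * m" using that by (intro mult_le_mono1) simp
        then have "x * m + m \<le> y * m" by simp
        then show ?thesis unfolding G_def by auto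
      qed
      show "G d \<inter> G d' = {}"
      proof (cases "d < d'")
        case True then show ?thesis by (rule aux)
      next
        case False then have "d' < d" using \<open>d \<noteq> d'\<close> by simp
        then show ?thesis using aux by blast
      qed
    qed
    obtain d where d: "d < K"
      "measure_pmf.expectation (alg hs) (\<lambda>S. if S \<inter> G d = {} then 1 else 0) \<ge> (real K - real B) / K"
      using one_step[OF A supp K1 disj] by blast
    define c where "c a = (if a \<in> G d then 0 else (1::real))" for a
    have Ec: "E hs c = measure_pmf.expectation (alg hs) (\<lambda>S. if S \<inter> G d = {} then 1 else 0)"
      unfolding E_def
    proof (rule integral_cong_AE)
      show "AE S in measure_pmf (alg hs). Min (c ` S) = (if S \<inter> G d = {} then 1 else 0)"
      proof (rule AE_pmfI)
        fix S assume "S \<in> set_pmf (alg hs)"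
        with supp[of hs] have SA: "S \<subseteq> A" "card S = B" by auto
        have cpos: "card S > 0" using SA(2) B1 by simp
        then have fS: "finite S" by (rule card_ge_0_finite)
        have "S \<noteq> {}" using cpos by (metis card.empty less_irrefl)
        from min_ind[OF fS this] show "Min (c ` S) = (if S \<inter> G d = {} then 1 else 0)"
          by (simp add: c_def)
      qed
    qed simp_all
    define hs' where "hs' = hs @ [c]"
    define lo' where "lo' = lo + d * m"
    have len: "length hs = t" using P unfolding P_def by simp
    have "P (Suc t) hs' lo'"
      unfolding P_def
    proof (intro conjI)
      show "length hs' = Suc t" using len by (simp add: hs'_def)
      show "\<forall>c\<in>set hs'. \<forall>a. c a = 0 \<or> c a = 1"
        using P unfolding P_def hs'_def by (auto simp: c_def)
      have "Suc d * m \<le> K * m" using d(1) by (intro mult_le_mono1) simp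
      then have dm: "lo' + m \<le> lo + K ^ (k - t)" unfolding lo'_def Km by simp
      then show "lo' + K ^ (k - Suc t) \<le> K ^ k" using P unfolding P_def m_def by simp
      show "\<forall>s<Suc t. \<forall>a\<in>A. lo' \<le> p a \<and> p a < lo' + K ^ (k - Suc t) \<longrightarrow> (hs' ! s) a = 0"
      proof (intro allI impI ballI)
        fix s a assume s: "s < Suc t" and a: "a \<in> A" and pa: "lo' \<le> p a \<and> p a < lo' + K ^ (k - Suc t)"
        show "(hs' ! s) a = 0"
        proof (cases "s < t")
          case True
          then have "hs' ! s = hs ! s" unfolding hs'_def using len by (simp add: nth_append)
          moreover have "lo \<le> p a \<and> p a < lo + K ^ (k - t)" using pa dm unfolding lo'_def m_def by simp
          ultimately show ?thesis using P True a unfolding P_def by simp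
        next
          case False
          then have "s = t" using s by simp
          then have "hs' ! s = c" unfolding hs'_def using len by (simp add: nth_append)
          moreover have "a \<in> G d" using pa a unfolding G_def lo'_def m_def by simp
          ultimately show ?thesis unfolding c_def by simp
        qed
      qed
      have "(\<Sum>s<Suc t. E (take s hs') (hs' ! s)) = (\<Sum>s<t. E (take s hs) (hs ! s)) + E hs c"
      proof -
        have "(\<Sum>s<t. E (take s hs') (hs' ! s)) = (\<Sum>s<t. E (take s hs) (hs ! s))"
          by (rule sum.cong) (auto simp: hs'_def nth_append len)
        moreover have "E (take t hs') (hs' ! t) = E hs c" by (simp add: hs'_def len nth_append)
        ultimately show ?thesis by simp
      qed
      moreover have "real t * (real K - real B) / real K \<le> (\<Sum>s<t. E (take s hs) (hs ! s))"
        using P unfolding P_def by simp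
      moreover have "real (Suc t) * (real K - real B) / real K = real t * (real K - real B) / real K + (real K - real B) / real K"
        using K1 by (simp add: field_simps)
      ultimately show "real (Suc t) * (real K - real B) / real K \<le> (\<Sum>s<Suc t. E (take s hs') (hs' ! s))"
        using d(2) Ec by linarith
    qed
    then show ?case by blast
  qed
  from step[of k] obtain hs lo where P: "P k hs lo" by blast
  have len: "length hs = k" and hs01: "\<forall>c\<in>set hs. \<forall>a. c a = 0 \<or> c a = 1"
    and lo1: "lo + 1 \<le> K ^ k" and zero: "\<forall>s<k. \<forall>a\<in>A. lo \<le> p a \<and> p a < lo + 1 \<longrightarrow> (hs ! s) a = 0"
    and sumk: "real k * (real K - real B) / real K \<le> (\<Sum>s<k. E (take s hs) (hs ! s))"
    using P unfolding P_def by auto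
  have loN: "lo \<in> {0..<card A}" using lo1 KN by simp
  define astar where "astar = inv_into A p lo"
  have aA: "astar \<in> A" unfolding astar_def using bij loN
    by (metis bij_betw_def inv_into_into)
  have pa: "p astar = lo" unfolding astar_def using bij loN
    by (meson bij_betw_inv_into_right)
  define cs where "cs t = (if t < k then hs ! t else (\<lambda>_. 0))" for t
  have valid: "\<forall>t. valid_cost A (cs t)"
  proof
    fix t
    show "valid_cost A (cs t)"
    proof (cases "t < k")
      case True
      then have "hs ! t \<in> set hs" using len by simp
      then have "\<forall>a. (hs ! t) a = 0 \<or> (hs ! t) a = 1" using hs01 by blast
      then have h: "(hs ! t) a = 0 \<or> (hs ! t) a = 1" for a by blast
      show ?thesis unfolding valid_cost_def cs_def
      proof (intro ballI)
        fix a show "0 \<le> (if t < k then hs ! t else (\<lambda>_. 0)) a \<and> (if t < k then hs ! t else (\<lambda>_. 0)) a \<le> 1"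
          using h[of a] True by auto
      qed
    next
      case False then show ?thesis unfolding valid_cost_def cs_def by simp
    qed
  qed
  have hist: "map cs [0..<t] = take t hs" if "t \<le> k" for t
    by (rule nth_equalityI) (use that len in \<open>auto simp: cs_def\<close>)
  have sum1: "(\<Sum>t<k. E (take t hs) (hs ! t)) = (\<Sum>t<k. E (map cs [0..<t]) (cs t))"
    by (rule sum.cong) (auto simp: hist cs_def)
  have sum2: "(\<Sum>t<k. E (map cs [0..<t]) (cs t)) \<le> (\<Sum>t<T. E (map cs [0..<t]) (cs t))"
  proof (rule sum_mono2)
    show "finite {..<T}" by simp
    show "{..<k} \<subseteq> {..<T}" using kT by auto
    fix t show "0 \<le> E (map cs [0..<t]) (cs t)"
      unfolding E_def using valid by (intro exp_bounds(1)[OF A B1 alg]) simp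
  qed
  have astar0: "(\<Sum>t<T. cs t astar) = 0"
  proof (rule sum.neutral, intro ballI)
    fix t assume "t \<in> {..<T}"
    show "cs t astar = 0"
      using zero aA pa by (cases "t < k") (auto simp: cs_def)
  qed
  have minle: "Min ((\<lambda>a. \<Sum>t<T. cs t a) ` A) \<le> 0"
  proof -
    have "Min ((\<lambda>a. \<Sum>t<T. cs t a) ` A) \<le> (\<Sum>t<T. cs t astar)"
      by (rule Min_le) (use A aA in auto)
    then show ?thesis using astar0 by simp
  qed
  have "regret A alg T cs = (\<Sum>t<T. E (map cs [0..<t]) (cs t)) - Min ((\<lambda>a. \<Sum>t<T. cs t a) ` A)"
    unfolding regret_def E_def by simp
  then have "real k * (real K - real B) / real K \<le> regret A alg T cs"
    using sumk sum1 sum2 minle by linarith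
  also have "\<dots> \<le> worst_regret A alg T" by (rule worst_ge[OF A B1 BN alg valid])
  finally show ?thesis .
qed

lemma pow4_bound: assumes "1 \<le> B" shows "2 * B \<le> (4::nat) ^ B" "B + 2 \<le> 2 * (4::nat) ^ B"
proof -
  have b: "B < 2 ^ B" by (rule less_exp)
  have p: "(4::nat) ^ B = 2 ^ B * 2 ^ B" by (metis power_mult_distrib num_double numeral_times_numeral)
  have "2 \<le> (2::nat) ^ B" using assms by (cases B) auto
  have "2 ^ B + 2 ^ B = 2 * (2::nat) ^ B" by (simp only: mult_2)
  also have "\<dots> \<le> (2::nat) ^ B * 2 ^ B" using \<open>2 \<le> (2::nat) ^ B\<close> by (rule mult_le_mono1)
  finally have "2 ^ B + 2 ^ B \<le> (2::nat) ^ B * 2 ^ B" .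
  then show "2 * B \<le> (4::nat) ^ B" using b p by linarith
  have "1 \<le> (4::nat) ^ B" by simp
  then show "B + 2 \<le> 2 * (4::nat) ^ B" using b p \<open>2 ^ B + 2 ^ B \<le> (2::nat) ^ B * 2 ^ B\<close> by linarith
qed

lemma final_bound:
  assumes A: "finite A" and B1: "1 \<le> B" and BN: "B \<le> card A" and alg: "valid_alg A B alg"
    and TL: "1 * (log 2 (real (card A)) - log 2 (real B)) \<le> real T"
  shows "1/4 * (1/4) ^ B * (log 2 (real (card A)) - log 2 (real B)) \<le> worst_regret A alg T"
proof -
  define N where "N = card A"
  have Bpos: "real B > 0" using B1 by simp
  have Npos: "real N > 0" using B1 BN unfolding N_def by simp
  have L: "log 2 (real N) - log 2 (real B) = log 2 (real N / real B)"
    using Bpos Npos by (simp add: log_divide)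
  have q4: "((1::real)/4) ^ B = 1 / 4 ^ B" by (simp add: power_one_over)
  have p4a: "real (2 * B) \<le> real (4 ^ B)" using pow4_bound(1)[OF B1] by (simp only: of_nat_le_iff)
  have p4b: "real (B + 2) \<le> real (2 * 4 ^ B)" using pow4_bound(2)[OF B1] by (simp only: of_nat_le_iff)
  have p4: "real (2 * B) \<le> 4 ^ B" "real (B + 2) \<le> 2 * 4 ^ B"
    using p4a p4b by simp_all
  consider (eq) "N = B" | (mid) "B < N" "N < 2 * B" | (big) "2 * B \<le> N"
    using BN unfolding N_def by linarith
  then show ?thesis
  proof cases
    case eq
    have "real 0 * (real 1 - real B) / real 1 \<le> worst_regret A alg T"
      by (rule main_lb[OF A B1 BN alg]) (use B1 BN in simp_all)
    then show ?thesis using eq unfolding N_def by simp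
  next
    case mid
    have gt1: "real N / real B > 1" using mid Bpos by simp
    have lt2: "real N / real B < 2" using mid Bpos by (simp add: divide_less_eq)
    have Lpos: "log 2 (real N / real B) > 0" using gt1 by simp
    have Lle1: "log 2 (real N / real B) \<le> 1"
    proof -
      have "log 2 (real N / real B) \<le> log 2 2" using lt2 gt1 by simp
      then show ?thesis by simp
    qed
    have TL': "log 2 (real N) - log 2 (real B) \<le> real T" using TL unfolding N_def by simp
    have "real T > 0" using TL' Lpos L by linarith
    then have T1: "1 \<le> T" by simp
    have w: "real 1 * (real N - real B) / real N \<le> worst_regret A alg T"
      by (rule main_lb[OF A B1 BN alg]) (use mid T1 B1 in \<open>simp_all add: N_def\<close>)
    have "1 / real N \<le> (real N - real B) / real N"
      using mid Npos by (simp add: divide_right_mono)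
    moreover have "1 / (2 * real B) \<le> 1 / real N"
      using mid Npos by (simp add: frac_le)
    moreover have "1 / 4 ^ B \<le> 1 / (2 * real B)"
      using p4(1) Bpos by (simp add: frac_le)
    moreover have "1/4 * (1 / 4 ^ B) * log 2 (real N / real B) \<le> 1 / 4 ^ B"
    proof -
      have nn: "(1::real) / 4 ^ B \<ge> 0" by simp
      have "1/4 * (1 / 4 ^ B) * log 2 (real N / real B) \<le> 1/4 * (1 / 4 ^ B) * 1"
        using Lle1 nn by (intro mult_left_mono) simp_all
      moreover have "1/4 * (1 / 4 ^ B) * 1 \<le> (1::real) / 4 ^ B" using nn by linarith
      ultimately show ?thesis by linarith
    qed
    ultimately show ?thesis using w L q4 unfolding N_def by simp
  next
    case big
    obtain k where k: "(2 * B) ^ k \<le> N" "N < (2 * B) ^ (k + 1)"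
      using ex_power_ivl1[of "2 * B" N] B1 big by auto
    have k1: "k \<ge> 1"
    proof (rule ccontr)
      assume "\<not> k \<ge> 1" then have "k = 0" by simp
      then show False using k(2) big by simp
    qed
    have Bk: "B \<le> B ^ k" using B1 k1 by (intro self_le_power) simp_all
    have lowN: "2 ^ k * B \<le> N"
    proof -
      have "2 ^ k * B \<le> 2 ^ k * B ^ k" using Bk by simp
      also have "\<dots> = (2 * B) ^ k" by (simp add: power_mult_distrib)
      finally show ?thesis using k(1) by (rule order_trans)
    qed
    have Bk2: "B ^ k \<le> 2 ^ (B * k)"
    proof -
      have "B ^ k \<le> (2 ^ B) ^ k" using less_exp[of B] by (intro power_mono) simp_all
      then show ?thesis by (simp add: power_mult)
    qed
    have upN: "N < 2 ^ (k + 1 + B * k) * B"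
    proof -
      have "(2 * B) ^ (k + 1) = 2 ^ (k + 1) * B ^ k * B" by (simp add: power_mult_distrib)
      also have "\<dots> \<le> 2 ^ (k + 1) * 2 ^ (B * k) * B" using Bk2 by simp
      also have "\<dots> = 2 ^ (k + 1 + B * k) * B" by (simp add: power_add)
      finally show ?thesis by (rule less_le_trans[OF k(2)])
    qed
    have Lge: "log 2 (real N / real B) \<ge> real k"
    proof -
      have "real (2 ^ k * B) \<le> real N" using lowN by (simp only: of_nat_le_iff)
      then have "2 ^ k \<le> real N / real B" using Bpos by (simp add: le_divide_eq)
      moreover have "0 < real N / real B" using Bpos Npos by simp
      ultimately have "log 2 (2 ^ k) \<le> log 2 (real N / real B)"
        using log_le_cancel_iff[of 2 "2 ^ k" "real N / real B"] by simp
      then show ?thesis by simp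
    qed
    have Llt: "log 2 (real N / real B) < real (k + 1 + B * k)"
    proof -
      have "real N < real (2 ^ (k + 1 + B * k) * B)" using upN by (simp only: of_nat_less_iff)
      then have "real N / real B < 2 ^ (k + 1 + B * k)" using Bpos by (simp add: divide_less_eq)
      moreover have "0 < real N / real B" using Bpos Npos by simp
      ultimately have "log 2 (real N / real B) < log 2 (2 ^ (k + 1 + B * k))"
        using log_less_cancel_iff[of 2 "real N / real B" "2 ^ (k + 1 + B * k)"] by simp
      also have "log 2 (2 ^ (k + 1 + B * k)) = real (k + 1 + B * k)"
        by (rule log_pow_cancel) simp_all
      finally show ?thesis .
    qed
    have TL': "log 2 (real N) - log 2 (real B) \<le> real T" using TL unfolding N_def by simp
    have Tk: "k \<le> T" using TL' L Lge by linarith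
    have w: "real k * (real (2 * B) - real B) / real (2 * B) \<le> worst_regret A alg T"
      by (rule main_lb[OF A B1 BN alg]) (use B1 k Tk in \<open>simp_all add: N_def\<close>)
    have w2: "real k * (real (2 * B) - real B) / real (2 * B) = real k / 2" using Bpos by simp
    have Lk: "log 2 (real N / real B) \<le> real k * real (B + 2)"
    proof -
      have k1r: "1 \<le> real k" using k1 by simp
      have i1: "1 + (real k + real B * real k) \<le> real k * (2 + real B)" using k1r by (simp add: algebra_simps)
      have i2: "log 2 (real N / real B) < 1 + (real k + real B * real k)" using Llt by simp
      have i3: "real k * real (B + 2) = real k * (2 + real B)" by simp
      show ?thesis using i1 i2 i3 by linarith
    qed
    have "1/4 * (1 / 4 ^ B) * log 2 (real N / real B) \<le> 1/4 * (1 / 4 ^ B) * (real k * real (B + 2))"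
      using Lk by (intro mult_left_mono) simp_all
    also have "\<dots> = real k / 4 * (real (B + 2) / 4 ^ B)" by simp
    also have "\<dots> \<le> real k / 4 * 2"
    proof (rule mult_left_mono)
      show "real (B + 2) / 4 ^ B \<le> 2" using p4(2) by (simp add: divide_le_eq)
    qed simp
    also have "\<dots> = real k / 2" by simp
    finally show ?thesis using w w2 L q4 unfolding N_def by simp
  qed
qed

theorem proposition10:
  shows "\<exists>c>0. \<exists>C>0. \<forall>(A::nat set) (B::nat) (T::nat) alg.
    finite A \<longrightarrow> 1 \<le> B \<longrightarrow> B \<le> card A \<longrightarrow> valid_alg A B alg \<longrightarrow>
    real T \<ge> C * (log 2 (real (card A)) - log 2 (real B)) \<longrightarrow>
    worst_regret A alg T \<ge> c * (1/4) ^ B * (log 2 (real (card A)) - log 2 (real B))"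
  apply (rule exI[of _ "1/4"])
  apply (rule conjI)
   apply simp
  apply (rule exI[of _ 1])
  apply (rule conjI)
   apply simp
  apply (intro allI impI)
  apply (rule final_bound)
      apply assumption+
  done

end
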